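(* Let $f:\mathrm{GF}(p^m)\to\mathrm{GF}(p^m)$, $f(x)=x^d$ with $d<p^m$, let $0<k\le m(p-1)$ with $k\le S_p(d)$, and let $h_1,\ldots,h_k\in\mathrm{GF}(p^m)\setminus\{0\}$. Write $d$ in base $p$ as $d=d_ud_{u-1}\ldots d_1d_0$. Let $i$ be the largest integer in $\{-1,0,\ldots,u\}$ with $d_0+d_1+\cdots+d_i\le k$ (empty sum $=0$ for $i=-1$), put $d'_{i+1}=d_{i+1}-(k-(d_0+\cdots+d_i))$ (with $d_{u+1}=0$), and let $d'$ be the integer with base-$p$ digits $d_u\ldots d_{i+2}d'_{i+1}0\ldots0$ ($i+1$ trailing zeros). Then $\Delta^{(k)}_{h_1\mathbf{e}_1,\ldots,h_k\mathbf{e}_1}x^d$ is either zero or a polynomial of degree at most $d'$. In particular, for $p=2$ the binary representation of $d'$ is obtained from that of $d$ by replacing its $k$ least significant ones by zeros.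
   Context: $(\Delta_{h\mathbf{e}_1} f)(x) = f(x+h)-f(x)$ and $\Delta^{(k)}_{\mathbf{a}_1,\ldots,\mathbf{a}_k}=\Delta_{\mathbf{a}_1}\cdots\Delta_{\mathbf{a}_k}$. $S_p(a)$ denotes the sum of the digits of the nonnegative integer $a$ in base $p$. Polynomial functions over $\mathrm{GF}(p^m)$ are represented with degree at most $p^m-1$ in each variable. *)

theory Defs
  imports "HOL-Computational_Algebra.Polynomial"
begin

text \<open>Finite difference in direction h (one variable, e_1 = 1).\<close>
definition delta :: "'a::ab_group_add \<Rightarrow> ('a \<Rightarrow> 'a) \<Rightarrow> ('a \<Rightarrow> 'a)" where
  "delta h f = (\<lambda>x. f (x + h) - f x)"

fun iter_delta :: "'a::ab_group_add list \<Rightarrow> ('a \<Rightarrow> 'a) \<Rightarrow> ('a \<Rightarrow> 'a)" where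
  "iter_delta [] f = f"
| "iter_delta (h # hs) f = delta h (iter_delta hs f)"

definition digit :: "nat \<Rightarrow> nat \<Rightarrow> nat \<Rightarrow> nat" where
  "digit p n j = n div p ^ j mod p"

text \<open>S_p(n): sum of base-p digits (for p \<ge> 2 all digits of index \<ge> n vanish).\<close>
definition digit_sum :: "nat \<Rightarrow> nat \<Rightarrow> nat" where
  "digit_sum p n = (\<Sum>j<n. digit p n j)"

definition top_index :: "nat \<Rightarrow> nat \<Rightarrow> nat" where
  "top_index p n = (GREATEST t. digit p n t \<noteq> 0)"

text \<open>The value i+1 of the paper: largest j in {0..u+1} with d_0+...+d_{j-1} \<le> k.\<close>
definition cut_index :: "nat \<Rightarrow> nat \<Rightarrow> nat \<Rightarrow> nat" where
  "cut_index p k d = (GREATEST j. j \<le> Suc (top_index p d) \<and> (\<Sum>t<j. digit p d t) \<le> k)"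

definition reduced_exp :: "nat \<Rightarrow> nat \<Rightarrow> nat \<Rightarrow> nat" where
  "reduced_exp p k d =
    (let j = cut_index p k d; u = top_index p d in
      (\<Sum>t\<in>{Suc j..u}. digit p d t * p ^ t)
      + (digit p d j - (k - (\<Sum>t<j. digit p d t))) * p ^ j)"

end

theory Submission
  imports Defs "HOL-Number_Theory.Cong" "HOL-Computational_Algebra.Primes"
begin

lemma digit_0: "digit p n 0 = n mod p" by (simp add: digit_def)

lemma digit_Suc: "digit p n (Suc t) = digit p (n div p) t"
  by (simp add: digit_def div_mult2_eq)

lemma digit_big: "n < p ^ t \<Longrightarrow> digit p n t = 0"
  by (simp add: digit_def)

lemma digit_lt: "1 < p \<Longrightarrow> digit p n t < p"
  by (simp add: digit_def)

lemma mod_rep: "n mod p ^ N = (\<Sum>t<N. digit p n t * p ^ t)"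
proof (induction N)
  case 0 then show ?case by simp
next
  case (Suc N)
  have "n mod p ^ Suc N = n mod (p ^ N * p)" by (simp add: mult.commute)
  also have "\<dots> = p ^ N * (n div p ^ N mod p) + n mod p ^ N" by (rule mod_mult2_eq)
  finally show ?case using Suc by (simp add: digit_def mult.commute)
qed

lemma rep: "n < p ^ N \<Longrightarrow> n = (\<Sum>t<N. digit p n t * p ^ t)"
  using mod_rep[of n p N] by simp

lemma lt_pow_self: "1 < (p::nat) \<Longrightarrow> n < p ^ n"
proof -
  assume "1 < p"
  have "n < 2 ^ n" by (rule less_exp)
  also have "(2::nat) ^ n \<le> p ^ n" using \<open>1 < p\<close> by (intro power_mono) auto
  finally show ?thesis .
qed

lemma pow_mono_lt: "1 < (p::nat) \<Longrightarrow> n < p ^ N \<Longrightarrow> N \<le> M \<Longrightarrow> n < p ^ M"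
  using power_increasing[of N M p] by (meson less_imp_le less_le_trans)

lemma dsum_ext:
  assumes "1 < (p::nat)" "n < p ^ N" "N \<le> M"
  shows "(\<Sum>t<M. digit p n t) = (\<Sum>t<N. digit p n t)"
proof (rule sum.mono_neutral_right)
  show "\<forall>i\<in>{..<M} - {..<N}. digit p n i = 0"
  proof
    fix i assume "i \<in> {..<M} - {..<N}"
    then have "N \<le> i" by auto
    then have "n < p ^ i" using pow_mono_lt[OF assms(1,2)] by blast
    then show "digit p n i = 0" by (rule digit_big)
  qed
qed (use assms in auto)

lemma dsum_eq:
  assumes "1 < p" "n < p ^ N"
  shows "(\<Sum>t<N. digit p n t) = digit_sum p n"
proof -
  have a: "n < p ^ n" using lt_pow_self[OF assms(1)] .
  have "(\<Sum>t<max N n. digit p n t) = (\<Sum>t<N. digit p n t)"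
    by (rule dsum_ext[OF assms]) auto
  moreover have "(\<Sum>t<max N n. digit p n t) = (\<Sum>t<n. digit p n t)"
    by (rule dsum_ext[OF assms(1) a]) auto
  ultimately show ?thesis by (simp add: digit_sum_def)
qed

definition dmn :: "nat \<Rightarrow> nat \<Rightarrow> nat \<Rightarrow> bool" where
  "dmn p a b \<longleftrightarrow> (\<forall>t. digit p a t \<le> digit p b t)"

lemma dom_refl: "dmn p a a" by (simp add: dmn_def)
lemma dom_trans: "dmn p a b \<Longrightarrow> dmn p b c \<Longrightarrow> dmn p a c"
  unfolding dmn_def using le_trans by blast

lemma dom_le_ds:
  assumes "1 < p" "dmn p a b"
  shows "digit_sum p a \<le> digit_sum p b"
proof -
  define N where "N = a + b"
  have "a < p ^ N" "b < p ^ N" using lt_pow_self[OF assms(1)] pow_mono_lt[OF assms(1)] unfolding N_def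
    by (metis le_add1 le_add2)+
  then show ?thesis using dsum_eq[OF assms(1)] assms(2) unfolding dmn_def
    by (metis sum_mono)
qed

lemma dom_lt_ds:
  assumes "1 < p" "dmn p a b" "a \<noteq> b"
  shows "digit_sum p a < digit_sum p b"
proof -
  define N where "N = a + b"
  have aN: "a < p ^ N" and bN: "b < p ^ N" using lt_pow_self[OF assms(1)] pow_mono_lt[OF assms(1)] unfolding N_def
    by (metis le_add1 le_add2)+
  have "\<exists>t<N. digit p a t \<noteq> digit p b t"
  proof (rule ccontr)
    assume "\<not> ?thesis"
    then have "(\<Sum>t<N. digit p a t * p ^ t) = (\<Sum>t<N. digit p b t * p ^ t)" by auto
    then show False using rep[OF aN] rep[OF bN] assms(3) by simp
  qed
  then obtain t where t: "t < N" "digit p a t < digit p b t" using assms(2) unfolding dmn_def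
    by (meson le_neq_implies_less)
  have "(\<Sum>t<N. digit p a t) < (\<Sum>t<N. digit p b t)"
    by (rule sum_strict_mono_ex1) (use assms(2) t in \<open>auto simp: dmn_def\<close>)
  then show ?thesis using dsum_eq[OF assms(1) aN] dsum_eq[OF assms(1) bN] by simp
qed


lemma top_facts:
  assumes p: "1 < p" and d: "0 < d"
  shows "digit p d (top_index p d) \<noteq> 0" "\<And>t. top_index p d < t \<Longrightarrow> digit p d t = 0"
    "top_index p d < d"
proof -
  have bnd: "\<And>t. digit p d t \<noteq> 0 \<Longrightarrow> t \<le> d"
  proof (rule ccontr)
    fix t assume "digit p d t \<noteq> 0" "\<not> t \<le> d"
    then have "d < p ^ t" using pow_mono_lt[OF p lt_pow_self[OF p, of d], of t] by simp
    then show False using \<open>digit p d t \<noteq> 0\<close> digit_big[of d p t] by simp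
  qed
  have ex: "\<exists>t. digit p d t \<noteq> 0"
  proof (rule ccontr)
    assume "\<not> ?thesis"
    then have "d = 0" using rep[OF lt_pow_self[OF p, of d]] by simp
    with d show False by simp
  qed
  then obtain t0 where t0: "digit p d t0 \<noteq> 0" by blast
  show nz: "digit p d (top_index p d) \<noteq> 0" unfolding top_index_def
    by (rule GreatestI_nat[where P="\<lambda>t. digit p d t \<noteq> 0", OF t0]) (use bnd in blast)
  show "\<And>t. top_index p d < t \<Longrightarrow> digit p d t = 0"
  proof (rule ccontr)
    fix t assume "top_index p d < t" "digit p d t \<noteq> 0"
    then have "t \<le> top_index p d" unfolding top_index_def
      by (intro Greatest_le_nat[of _ t d]) (use bnd in blast)+
    with \<open>top_index p d < t\<close> show False by simp
  qed
  have "\<not> d < p ^ top_index p d" using nz digit_big[of d p "top_index p d"] by auto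
  then show "top_index p d < d" using lt_pow_self[OF p, of "top_index p d"] by simp
qed

lemma cut_facts:
  assumes p: "1 < p" and d: "0 < d" and k: "k \<le> digit_sum p d"
  defines "j \<equiv> cut_index p k d" and "u \<equiv> top_index p d"
  shows "j \<le> Suc u" "(\<Sum>t<j. digit p d t) \<le> k" "k \<le> (\<Sum>t<j. digit p d t) + digit p d j"
proof -
  let ?P = "\<lambda>j. j \<le> Suc u \<and> (\<Sum>t<j. digit p d t) \<le> k"
  have P0: "?P 0" by simp
  have Pj: "?P j" unfolding j_def cut_index_def u_def
    by (rule GreatestI_nat[of _ 0 "Suc (top_index p d)"]) (use P0 u_def in auto)
  then show "j \<le> Suc u" "(\<Sum>t<j. digit p d t) \<le> k" by auto
  have lej: "\<And>i. ?P i \<Longrightarrow> i \<le> j" unfolding j_def cut_index_def u_def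
    by (rule Greatest_le_nat[of _ _ "Suc (top_index p d)"]) (auto simp: u_def)
  show "k \<le> (\<Sum>t<j. digit p d t) + digit p d j"
  proof (cases "j \<le> u")
    case True
    then have "\<not> ?P (Suc j)" using lej by fastforce
    then show ?thesis using True by simp
  next
    case False
    then have jeq: "j = Suc u" using Pj by simp
    have dl: "d < p ^ Suc u"
    proof -
      have "d = (\<Sum>t<d. digit p d t * p ^ t)" by (rule rep[OF lt_pow_self[OF p]])
      also have "\<dots> = (\<Sum>t<Suc u. digit p d t * p ^ t)"
        by (rule sum.mono_neutral_right) (use top_facts[OF p d] u_def in auto)
      also have "\<dots> = d mod p ^ Suc u" by (rule mod_rep[symmetric])
      also have "\<dots> < p ^ Suc u" using p by simp
      finally show ?thesis .
    qed
    show ?thesis using dsum_eq[OF p dl] k jeq by simp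
  qed
qed


lemma dvd_gap:
  fixes a b m :: nat
  assumes "a < b" "m dvd a" "m dvd b"
  shows "a + m \<le> b"
proof -
  obtain x y where "a = m * x" "b = m * y" using assms by (auto elim!: dvdE)
  with assms(1) have "x < y" by (metis mult_less_cancel1)
  then have "m * x + m \<le> m * y" by (metis Suc_leI mult_Suc_right mult_le_mono2 add.commute)
  then show ?thesis using \<open>a = m * x\<close> \<open>b = m * y\<close> by simp
qed

lemma comb:
  assumes p: "1 < p" and d: "0 < d" and k: "k \<le> digit_sum p d"
    and de: "dmn p e d" and s: "digit_sum p e + k \<le> digit_sum p d"
  shows "e \<le> reduced_exp p k d"
proof -
  define j where "j = cut_index p k d"
  define u where "u = top_index p d"
  have j1: "j \<le> Suc u" and j2: "(\<Sum>t<j. digit p d t) \<le> k"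
    and j3: "k \<le> (\<Sum>t<j. digit p d t) + digit p d j"
    using cut_facts[OF p d k] unfolding j_def u_def by auto
  have u1: "\<And>t. u < t \<Longrightarrow> digit p d t = 0" and u2: "u < d"
    using top_facts[OF p d] unfolding u_def by auto
  define N where "N = e + d + 1"
  have eN: "e < p ^ N" using pow_mono_lt[OF p lt_pow_self[OF p, of e], of N] by (simp add: N_def)
  have dN: "d < p ^ N" using pow_mono_lt[OF p lt_pow_self[OF p, of d], of N] by (simp add: N_def)
  have jN: "j < N" using j1 u2 by (simp add: N_def)
  have split: "(\<Sum>t<N. f t) = (\<Sum>t<j. f t) + f j + (\<Sum>t\<in>{Suc j..<N}. f t)" for f :: "nat \<Rightarrow> nat"
  proof -
    have "(\<Sum>t<N. f t) = (\<Sum>t\<in>{0..<Suc j}. f t) + (\<Sum>t\<in>{Suc j..<N}. f t)"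
      unfolding lessThan_atLeast0 by (rule sum.atLeastLessThan_concat[symmetric]) (use jN in auto)
    then show ?thesis by (simp add: atLeast0LessThan)
  qed
  define H where "H n = (\<Sum>t\<in>{Suc j..<N}. digit p n t * p ^ t)" for n
  define G where "G n = (\<Sum>t\<in>{Suc j..<N}. digit p n t)" for n
  define Lo where "Lo n = (\<Sum>t<j. digit p n t * p ^ t)" for n
  define Ls where "Ls n = (\<Sum>t<j. digit p n t)" for n
  have e_eq: "e = Lo e + digit p e j * p ^ j + H e"
    using rep[OF eN] split[of "\<lambda>t. digit p e t * p ^ t"] by (simp add: Lo_def H_def)
  have dse: "digit_sum p e = Ls e + digit p e j + G e"
    using dsum_eq[OF p eN] split[of "\<lambda>t. digit p e t"] by (simp add: Ls_def G_def)
  have dsd: "digit_sum p d = Ls d + digit p d j + G d"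
    using dsum_eq[OF p dN] split[of "\<lambda>t. digit p d t"] by (simp add: Ls_def G_def)
  have Hd: "(\<Sum>t\<in>{Suc j..u}. digit p d t * p ^ t) = H d"
    unfolding H_def
    by (rule sum.mono_neutral_right[symmetric]) (use u1 u2 in \<open>auto simp: N_def\<close>)
  define r where "r = digit p d j - (k - Ls d)"
  have rexp: "reduced_exp p k d = H d + r * p ^ j"
    unfolding reduced_exp_def Let_def j_def[symmetric] u_def[symmetric] Hd r_def Ls_def by simp
  have Lo_lt: "Lo e < p ^ j" unfolding Lo_def using mod_rep[of e p j] p by (metis mod_less_divisor zero_less_power
     less_trans zero_less_one)
  have ejp: "digit p e j < p" using p by (simp add: digit_lt)
  have dom_t: "digit p e t \<le> digit p d t" for t using de by (simp add: dmn_def)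
  show ?thesis
  proof (cases "\<exists>t\<in>{Suc j..<N}. digit p e t < digit p d t")
    case True
    then obtain t where t: "t \<in> {Suc j..<N}" "digit p e t < digit p d t" by blast
    have "H e < H d" unfolding H_def
    proof (rule sum_strict_mono_ex1)
      show "\<forall>x\<in>{Suc j..<N}. digit p e x * p ^ x \<le> digit p d x * p ^ x"
        using dom_t by (simp add: mult_le_mono1)
      show "\<exists>a\<in>{Suc j..<N}. digit p e a * p ^ a < digit p d a * p ^ a"
        using t p by (intro bexI[of _ t]) auto
    qed simp
    moreover have "p ^ Suc j dvd H n" for n unfolding H_def
    proof (rule dvd_sum)
      fix t assume "t \<in> {Suc j..<N}"
      then have "p ^ Suc j dvd p ^ t" by (intro le_imp_power_dvd) auto
      then show "p ^ Suc j dvd digit p n t * p ^ t" by (rule dvd_mult)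
    qed
    ultimately have gap: "H e + p ^ Suc j \<le> H d" by (intro dvd_gap) auto
    have "(digit p e j + 1) * p ^ j \<le> p * p ^ j" using ejp by (intro mult_le_mono1) simp
    then have "e < p ^ Suc j + H e" using e_eq Lo_lt by (simp add: algebra_simps)
    with gap rexp show ?thesis by simp
  next
    case False
    then have eq: "digit p e t = digit p d t" if "t \<in> {Suc j..<N}" for t
      using dom_t[of t] that by (meson le_neq_implies_less)
    have HE: "H e = H d" unfolding H_def by (rule sum.cong) (auto simp: eq)
    have GE: "G e = G d" unfolding G_def by (rule sum.cong) (auto simp: eq)
    have j3': "k - Ls d \<le> digit p d j" using j3 unfolding Ls_def by simp
    have j2': "Ls d \<le> k" using j2 unfolding Ls_def by simp
    have main: "Ls e + digit p e j \<le> r"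
      using s dse dsd GE j2' j3' unfolding r_def by linarith
    show ?thesis
    proof (cases "Ls e = 0")
      case True
      then have "\<forall>t<j. digit p e t = 0" unfolding Ls_def by simp
      then have "Lo e = 0" unfolding Lo_def by simp
      then have "e = digit p e j * p ^ j + H d" using e_eq HE by simp
      moreover have "digit p e j * p ^ j \<le> r * p ^ j" using main by (intro mult_le_mono1) simp
      ultimately show ?thesis using rexp by linarith
    next
      case False
      then have "(digit p e j + 1) * p ^ j \<le> r * p ^ j" using main by (intro mult_le_mono1) simp
      then show ?thesis using e_eq HE Lo_lt rexp by (simp add: algebra_simps)
    qed
  qed
qed


definition supp_in :: "nat set \<Rightarrow> 'a::zero poly \<Rightarrow> bool" where
  "supp_in S P \<longleftrightarrow> (\<forall>n. coeff P n \<noteq> 0 \<longrightarrow> n \<in> S)"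

lemma supp_mono: "supp_in S P \<Longrightarrow> S \<subseteq> T \<Longrightarrow> supp_in T P"
  unfolding supp_in_def by blast

lemma supp_sum:
  fixes f :: "'b \<Rightarrow> 'a::comm_monoid_add poly"
  assumes "\<And>i. i \<in> A \<Longrightarrow> supp_in S (f i)"
  shows "supp_in S (\<Sum>i\<in>A. f i)"
  unfolding supp_in_def coeff_sum
proof (intro allI impI)
  fix n assume "(\<Sum>i\<in>A. coeff (f i) n) \<noteq> 0"
  then obtain i where "i \<in> A" "coeff (f i) n \<noteq> 0"
    by (meson sum.not_neutral_contains_not_neutral)
  then show "n \<in> S" using assms unfolding supp_in_def by blast
qed

lemma supp_smult: "supp_in S P \<Longrightarrow> supp_in S (smult c P)"
  unfolding supp_in_def by (metis coeff_smult mult_zero_right)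

lemma supp_monom: "supp_in {n} (monom c n)"
  unfolding supp_in_def by (auto simp: coeff_monom)

lemma supp_mult:
  fixes P Q :: "'a::comm_semiring_0 poly"
  assumes "supp_in A P" "supp_in B Q"
  shows "supp_in {a + b | a b. a \<in> A \<and> b \<in> B} (P * Q)"
  unfolding supp_in_def coeff_mult
proof (intro allI impI)
  fix n assume "(\<Sum>i\<le>n. coeff P i * coeff Q (n - i)) \<noteq> 0"
  then obtain i where "i \<le> n" "coeff P i * coeff Q (n - i) \<noteq> 0"
    by (meson sum.not_neutral_contains_not_neutral atMost_iff)
  then have "coeff P i \<noteq> 0" "coeff Q (n - i) \<noteq> 0" by auto
  then have "i \<in> A" "n - i \<in> B" using assms unfolding supp_in_def by auto
  moreover have "n = i + (n - i)" using \<open>i \<le> n\<close> by simp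
  ultimately show "n \<in> {a + b | a b. a \<in> A \<and> b \<in> B}" by blast
qed

lemma frob:
  fixes a b :: "'b::comm_ring_1"
  assumes pr: "prime p" and ch: "of_nat p = (0::'b)"
  shows "(a + b) ^ p = a ^ p + b ^ p"
proof -
  have p0: "p \<noteq> 0" using pr by auto
  have "(a + b) ^ p = (\<Sum>k\<le>p. of_nat (p choose k) * a ^ k * b ^ (p - k))"
    by (rule binomial_ring)
  also have "\<dots> = (\<Sum>k\<le>p. (if k = p then a ^ p else 0) + (if k = 0 then b ^ p else 0))"
  proof (rule sum.cong)
    fix k assume "k \<in> {..p}"
    then have kp: "k \<le> p" by simp
    show "of_nat (p choose k) * a ^ k * b ^ (p - k) = (if k = p then a ^ p else 0) + (if k = 0 then b ^ p else 0)"
    proof (cases "k = 0 \<or> k = p")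
      case True then show ?thesis using p0 by auto
    next
      case False
      then have "p dvd (p choose k)" using kp p0 pr by (intro dvd_choose_prime) auto
      then obtain q where "p choose k = p * q" by (auto elim: dvdE)
      then have "of_nat (p choose k) = (0::'b)" using ch by simp
      then show ?thesis using False by simp
    qed
  qed simp
  also have "\<dots> = a ^ p + b ^ p" by (simp add: sum.distrib)
  finally show ?thesis .
qed

lemma binom_supp:
  fixes c :: "'a::comm_ring_1"
  shows "supp_in {M * i | i. i \<le> r} ((monom 1 M + [:c:]) ^ r)"
proof -
  have "(monom 1 M + [:c:]) ^ r = (\<Sum>k\<le>r. of_nat (r choose k) * monom 1 M ^ k * [:c:] ^ (r - k))"
    by (rule binomial_ring)
  also have "\<dots> = (\<Sum>k\<le>r. monom (of_nat (r choose k) * c ^ (r - k)) (M * k))"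
    by (rule sum.cong) (simp_all add: monom_power monom_0[symmetric] mult_monom of_nat_monom mult.commute)
  finally have eq: "(monom 1 M + [:c:]) ^ r = (\<Sum>k\<le>r. monom (of_nat (r choose k) * c ^ (r - k)) (M * k))" .
  show ?thesis unfolding eq
    by (rule supp_sum) (rule supp_mono[OF supp_monom], auto)
qed

lemma digit_pq: "i < p \<Longrightarrow> digit p (p * q + i) 0 = i" by (simp add: digit_0)
lemma digit_pq_Suc: "i < p \<Longrightarrow> digit p (p * q + i) (Suc t) = digit p q t" by (simp add: digit_Suc)

lemma expand:
  assumes pr: "prime p" and ch: "of_nat p = (0::'a::comm_ring_1)"
  shows "supp_in {p ^ s * e' | e'. dmn p e' e} ((monom 1 (p ^ s) + [:c::'a:]) ^ e)"
proof (induction e arbitrary: s c rule: less_induct)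
  case (less e)
  have p1: "1 < p" using pr prime_gt_1_nat by blast
  show ?case
  proof (cases "e = 0")
    case True
    have "dmn p 0 0" by (rule dom_refl)
    then show ?thesis using True unfolding supp_in_def by (auto simp: coeff_1 intro!: exI[of _ 0])
  next
    case False
    define q where "q = e div p"
    define r where "r = e mod p"
    have qe: "q < e" using False p1 by (simp add: q_def)
    have eqr: "e = p * q + r" by (simp add: q_def r_def)
    have rp: "r < p" using p1 by (simp add: r_def)
    let ?X = "monom 1 (p ^ s) + [:c:]"
    have "?X ^ p = monom 1 (p ^ s) ^ p + [:c:] ^ p"
      by (rule frob[OF pr]) (simp add: of_nat_poly ch)
    also have "\<dots> = monom 1 (p ^ Suc s) + [:c ^ p:]"
      by (simp add: monom_power monom_0[symmetric] mult.commute)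
    finally have Xp: "?X ^ p = monom 1 (p ^ Suc s) + [:c ^ p:]" .
    have "?X ^ e = (?X ^ p) ^ q * ?X ^ r" by (simp add: eqr power_add power_mult)
    also have "\<dots> = (monom 1 (p ^ Suc s) + [:c ^ p:]) ^ q * ?X ^ r" by (simp add: Xp)
    finally have Xe: "?X ^ e = (monom 1 (p ^ Suc s) + [:c ^ p:]) ^ q * ?X ^ r" .
    have s1: "supp_in {p ^ Suc s * e' | e'. dmn p e' q} ((monom 1 (p ^ Suc s) + [:c ^ p:]) ^ q)"
      by (rule less.IH[OF qe])
    have s2: "supp_in {p ^ s * i | i. i \<le> r} (?X ^ r)" by (rule binom_supp)
    show ?thesis unfolding Xe
    proof (rule supp_mono[OF supp_mult[OF s1 s2]], safe)
      fix q' i assume dq: "dmn p q' q" and ir: "i \<le> r"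
      have ip: "i < p" using ir rp by simp
      have "dmn p (p * q' + i) e"
        unfolding dmn_def
      proof
        fix t show "digit p (p * q' + i) t \<le> digit p e t"
        proof (cases t)
          case 0 then show ?thesis using ip ir rp eqr digit_pq[of i p] digit_pq[of r p q] by simp
        next
          case (Suc t') then show ?thesis using ip rp eqr digit_pq_Suc[of i p] digit_pq_Suc[of r p q] dq
            by (simp add: dmn_def)
        qed
      qed
      moreover have "p ^ Suc s * q' + p ^ s * i = p ^ s * (p * q' + i)"
        by (simp add: algebra_simps)
      ultimately show "\<exists>e'. p ^ Suc s * q' + p ^ s * i = p ^ s * e' \<and> dmn p e' e" by blast
    qed
  qed
qed

lemma expand_lin:
  assumes pr: "prime p" and ch: "of_nat p = (0::'a::comm_ring_1)"
  shows "supp_in {e'. dmn p e' e} ([:c::'a, 1:] ^ e)"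
proof -
  have "[:c, 1:] = monom 1 (p ^ 0) + [:c:]" by (simp add: monom_Suc)
  then show ?thesis using expand[OF pr ch, of 0 e c] by simp
qed


lemma char_dvd_card: "CHAR('a::{finite,ring_1}) dvd card (UNIV::'a set)"
proof -
  define q where "q = CHAR('a)"
  have q0: "q > 0" unfolding q_def by (rule finite_imp_CHAR_pos) simp
  have ofm: "of_nat i = (of_nat (i mod q)::'a)" for i
    by (simp add: of_nat_eq_iff_cong_CHAR q_def cong_def)
  have ofq: "of_nat q = (0::'a)" unfolding q_def by simp
  define r where "r = {(x::'a, y). \<exists>i. y = x + of_nat i}"
  have rf: "refl_on UNIV r" unfolding refl_on_def r_def by (auto intro: exI[of _ 0])
  have sy: "sym r" unfolding sym_def
  proof (intro allI impI)
    fix x y assume "(x, y) \<in> r"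
    then obtain i where i: "y = x + of_nat i" unfolding r_def by auto
    have le: "i mod q \<le> q" using q0 by (simp add: order.strict_implies_order)
    have "of_nat (q - i mod q) = (of_nat q - of_nat (i mod q) :: 'a)" using le by (simp add: of_nat_diff)
    also have "\<dots> = - of_nat i" using ofq ofm[of i] by simp
    finally have "x = y + of_nat (q - i mod q)" using i by simp
    then show "(y, x) \<in> r" unfolding r_def by blast
  qed
  have tr: "trans r" unfolding trans_def
  proof (intro allI impI)
    fix x y z assume "(x, y) \<in> r" "(y, z) \<in> r"
    then obtain i j where "y = x + of_nat i" "z = y + of_nat j" unfolding r_def by auto
    then have "z = x + of_nat (i + j)" by (simp add: add.assoc)
    then show "(x, z) \<in> r" unfolding r_def by blast
  qed
  have eqv: "equiv UNIV r" using rf sy tr by (simp add: equiv_def)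
  show ?thesis unfolding q_def[symmetric]
  proof (rule equiv_imp_dvd_card[OF _ eqv])
    fix X assume "X \<in> UNIV // r"
    then obtain x where X: "X = r `` {x}" unfolding quotient_def by auto
    have "X = (\<lambda>i. x + of_nat i) ` {..<q}"
    proof
      show "X \<subseteq> (\<lambda>i. x + of_nat i) ` {..<q}"
      proof
        fix y assume "y \<in> X"
        then obtain i where "y = x + of_nat i" unfolding X r_def by auto
        then have "y = x + of_nat (i mod q)" using ofm by simp
        moreover have "i mod q < q" using q0 by simp
        ultimately show "y \<in> (\<lambda>i. x + of_nat i) ` {..<q}" by blast
      qed
      show "(\<lambda>i. x + of_nat i) ` {..<q} \<subseteq> X" unfolding X r_def by auto
    qed
    moreover have "inj_on (\<lambda>i. x + (of_nat i :: 'a)) {..<q}"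
    proof (rule inj_onI)
      fix i j assume "i \<in> {..<q}" "j \<in> {..<q}" "x + (of_nat i :: 'a) = x + of_nat j"
      then have "[i = j] (mod q)" "i < q" "j < q" by (auto simp: of_nat_eq_iff_cong_CHAR q_def)
      then show "i = j" by (simp add: cong_def)
    qed
    ultimately show "q dvd card X" by (simp add: card_image)
  qed simp
qed


lemma dstep:
  fixes P :: "'a::comm_ring_1 poly"
  assumes pr: "prime p" and ch: "of_nat p = (0::'a)"
    and sP: "supp_in {e. dmn p e d \<and> digit_sum p e + n \<le> digit_sum p d} P"
  shows "\<exists>Q. supp_in {e. dmn p e d \<and> digit_sum p e + Suc n \<le> digit_sum p d} Q \<and>
             (\<forall>x. poly P (x + h) - poly P x = poly Q x)"
proof -
  have p1: "1 < p" using pr prime_gt_1_nat by blast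
  define Q where "Q = (\<Sum>i\<le>degree P. smult (coeff P i) ([:h, 1:] ^ i - monom 1 i))"
  have "poly P (x + h) - poly P x = poly Q x" for x
  proof -
    have "poly Q x = (\<Sum>i\<le>degree P. coeff P i * ((h + x) ^ i - x ^ i))"
      unfolding Q_def by (simp add: poly_sum poly_monom)
    also have "\<dots> = (\<Sum>i\<le>degree P. coeff P i * (x + h) ^ i) - (\<Sum>i\<le>degree P. coeff P i * x ^ i)"
      by (simp add: right_diff_distrib sum_subtractf add.commute)
    also have "\<dots> = poly P (x + h) - poly P x" by (simp add: poly_altdef)
    finally show ?thesis by simp
  qed
  moreover have "supp_in {e. dmn p e d \<and> digit_sum p e + Suc n \<le> digit_sum p d} Q"
    unfolding Q_def
  proof (rule supp_sum)
    fix i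
    show "supp_in {e. dmn p e d \<and> digit_sum p e + Suc n \<le> digit_sum p d}
            (smult (coeff P i) ([:h, 1:] ^ i - monom 1 i))"
    proof (cases "coeff P i = 0")
      case True then show ?thesis by (simp add: supp_in_def)
    next
      case False
      then have di: "dmn p i d" and si: "digit_sum p i + n \<le> digit_sum p d"
        using sP unfolding supp_in_def by auto
      have "supp_in {e. dmn p e d \<and> digit_sum p e + Suc n \<le> digit_sum p d} ([:h, 1:] ^ i - monom 1 i)"
        unfolding supp_in_def
      proof (intro allI impI)
        fix m assume m: "coeff ([:h, 1:] ^ i - monom 1 i) m \<noteq> 0"
        have mi: "m \<noteq> i" using m by (auto simp: coeff_linear_power)
        then have "coeff ([:h, 1:] ^ i) m \<noteq> 0" using m by (simp add: coeff_monom)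
        then have "dmn p m i" using expand_lin[OF pr ch, of i h] unfolding supp_in_def by blast
        then have "dmn p m d" "digit_sum p m < digit_sum p i"
          using dom_trans[OF _ di] dom_lt_ds[OF p1 _ mi] by auto
        then show "m \<in> {e. dmn p e d \<and> digit_sum p e + Suc n \<le> digit_sum p d}" using si by simp
      qed
      then show ?thesis by (rule supp_smult)
    qed
  qed
  ultimately show ?thesis by blast
qed

lemma main_ind:
  fixes hs :: "'a::comm_ring_1 list"
  assumes pr: "prime p" and ch: "of_nat p = (0::'a)"
  shows "\<exists>P. supp_in {e. dmn p e d \<and> digit_sum p e + length hs \<le> digit_sum p d} P \<and>
           (\<forall>x. iter_delta hs (\<lambda>y. y ^ d) x = poly P x)"
proof (induction hs)
  case Nil
  have "supp_in {e. dmn p e d \<and> digit_sum p e + length [] \<le> digit_sum p d} (monom 1 d)"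
    by (rule supp_mono[OF supp_monom]) (simp add: dom_refl)
  then show ?case by (intro exI[of _ "monom 1 d"]) (simp add: poly_monom)
next
  case (Cons h hs)
  then obtain P where sP: "supp_in {e. dmn p e d \<and> digit_sum p e + length hs \<le> digit_sum p d} P"
    and eP: "\<forall>x. iter_delta hs (\<lambda>y. y ^ d) x = poly P x" by blast
  obtain Q where sQ: "supp_in {e. dmn p e d \<and> digit_sum p e + Suc (length hs) \<le> digit_sum p d} Q"
    and eQ: "\<forall>x. poly P (x + h) - poly P x = poly Q x"
    using dstep[OF pr ch sP, of h] by blast
  have "\<forall>x. iter_delta (h # hs) (\<lambda>y. y ^ d) x = poly Q x"
    using eP eQ by (simp add: delta_def)
  with sQ show ?case by auto
qed

theorem mainTheorem11:
  fixes hs :: "'a::{finite,field} list" and p m d k :: nat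
  assumes "prime p" and "m \<ge> 1" and "card (UNIV :: 'a set) = p ^ m"
    and "d < p ^ m"
    and "0 < k" and "k \<le> m * (p - 1)" and "k \<le> digit_sum p d"
    and "length hs = k" and "\<forall>h\<in>set hs. h \<noteq> 0"
  shows "\<exists>P :: 'a poly. degree P \<le> reduced_exp p k d \<and>
           (\<forall>x. iter_delta hs (\<lambda>y. y ^ d) x = poly P x)"
proof -
  have pr: "prime p" by fact
  have p1: "1 < p" using pr prime_gt_1_nat by blast
  have cpos: "CHAR('a) > 0" by (rule finite_imp_CHAR_pos) simp
  have cpr: "prime CHAR('a)" using cpos by (rule prime_CHAR_semidom)
  have "CHAR('a) dvd p ^ m" using char_dvd_card assms(3) by metis
  then have "CHAR('a) dvd p" using cpr prime_dvd_power by blast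
  then have "CHAR('a) = p" using cpr pr primes_dvd_imp_eq by blast
  then have ch: "of_nat p = (0::'a)" by (metis of_nat_CHAR)
  obtain P where sP: "supp_in {e. dmn p e d \<and> digit_sum p e + k \<le> digit_sum p d} P"
    and eP: "\<forall>x. iter_delta hs (\<lambda>y. y ^ d) x = poly P x"
    using main_ind[OF pr ch, of d hs] assms(8) by blast
  have d0: "0 < d"
  proof (rule ccontr)
    assume "\<not> 0 < d"
    then have "d = 0" by simp
    then show False using assms(5,7) by (simp add: digit_sum_def)
  qed
  have "degree P \<le> reduced_exp p k d"
  proof (cases "P = 0")
    case True then show ?thesis by simp
  next
    case False
    then have "coeff P (degree P) \<noteq> 0" by simp
    then have "dmn p (degree P) d" "digit_sum p (degree P) + k \<le> digit_sum p d"
      using sP unfolding supp_in_def by auto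
    then show ?thesis using comb[OF p1 d0 assms(7)] by blast
  qed
  with eP show ?thesis by blast
qed

end
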